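(* Let $S$ be a set, $x\in\mathbb{R}$, and $f:\mathbb{R}\to S$ a scenario that is past-affine-invariant on $(-\infty,x)$. Then there is an affine-invariant scenario $g:\mathbb{R}\to S$ such that $f\upharpoonright(-\infty,x)=g\upharpoonright(-\infty,x)$.
   Context: A scenario is a function $f:\mathbb{R}\to S$ for an arbitrary set $S$. Let $T_2$ be the set of all functions $t:\mathbb{R}\to\mathbb{R}$ of the form $t(y)=ay+c$ with $a>0$, $c\in\mathbb{R}$. A scenario $f$ is affine-invariant if there is some $t\in T_2$, not the identity, with $f=f\circ t$. A scenario $f$ is past-affine-invariant on $(-\infty,x)$ if there is a non-identity $t\in T_2$ with $f\upharpoonright(-\infty,x)=(f\circ t)\upharpoonright(-\infty,x)$. *)

theory Defs
  imports Main "HOL.Real"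
begin

definition T2 :: "(real \<Rightarrow> real) set" where
  "T2 = {t. \<exists>a c. a > 0 \<and> t = (\<lambda>y. a * y + c)}"

definition affine_invariant :: "(real \<Rightarrow> 's) \<Rightarrow> bool" where
  "affine_invariant f \<longleftrightarrow> (\<exists>t\<in>T2. t \<noteq> id \<and> f = f \<circ> t)"

definition past_affine_invariant :: "(real \<Rightarrow> 's) \<Rightarrow> real \<Rightarrow> bool" where
  "past_affine_invariant f x \<longleftrightarrow>
     (\<exists>t\<in>T2. t \<noteq> id \<and> (\<forall>y. y < x \<longrightarrow> f y = (f \<circ> t) y))"

end

theory Submission
  imports Defs
begin

lemma iter_below:
  assumes into: "\<And>z. z < x \<Longrightarrow> u z < x"
    and inv: "\<And>z. z < x \<Longrightarrow> f (u z) = f z"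
    and z: "z < x"
  shows "(u^^n) z < x \<and> f ((u^^n) z) = f z"
  using z by (induction n) (auto simp: into inv)

lemma iter_same:
  assumes into: "\<And>z. z < x \<Longrightarrow> u z < x"
    and inv: "\<And>z. z < x \<Longrightarrow> f (u z) = f z"
    and n: "(u^^n) y < x" and m: "(u^^m) y < x"
  shows "f ((u^^n) y) = f ((u^^m) y)"
proof -
  have gen: "f ((u^^k) y) = f ((u^^l) y)" if "k \<le> l" "(u^^k) y < x" for k l
  proof -
    have "(u^^l) y = (u^^(l-k)) ((u^^k) y)"
      using that(1) by (metis funpow_add le_add_diff_inverse2 o_apply)
    then show ?thesis using iter_below[where x=x and u=u and f=f, OF into inv that(2)] by simp
  qed
  show ?thesis
    proof (cases "n \<le> m")
    case True then show ?thesis using gen n by blast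
  next
    case False then have "m \<le> n" by simp
    then show ?thesis using gen m by metis
  qed
qed

lemma build:
  fixes f :: "real \<Rightarrow> 's"
  assumes uT: "u \<in> T2" and uid: "u \<noteq> id"
    and into: "\<And>z. z < x \<Longrightarrow> u z < x"
    and inv: "\<And>z. z < x \<Longrightarrow> f (u z) = f z"
  shows "\<exists>g :: real \<Rightarrow> 's. affine_invariant g \<and> (\<forall>y. y < x \<longrightarrow> f y = g y)"
proof -
  define g where "g y = (if \<exists>n. (u^^n) y < x then f ((u^^(SOME n. (u^^n) y < x)) y) else f x)" for y
  have gval: "g y = f ((u^^n) y)" if "(u^^n) y < x" for y n
  proof -
    have ex: "\<exists>n. (u^^n) y < x" using that by blast
    have "(u^^(SOME n. (u^^n) y < x)) y < x" using someI_ex[OF ex] .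
    then show ?thesis unfolding g_def using ex iter_same[where x=x and u=u and f=f, OF into inv _ that] by auto
  qed
  have agree: "\<forall>y. y < x \<longrightarrow> f y = g y"
    using gval[where n=0] by auto
  have "g (u y) = g y" for y
  proof (cases "\<exists>n. (u^^n) y < x")
    case True
    then obtain n where n: "(u^^n) y < x" by blast
    have "(u^^(Suc n)) y < x" using iter_below[where x=x and u=u and f=f and n=1, OF into inv n] by simp
    hence "(u^^n) (u y) < x" by (simp add: funpow_swap1)
    then have "g (u y) = f ((u^^n) (u y))" by (rule gval)
    also have "\<dots> = f (u ((u^^n) y))" by (simp add: funpow_swap1)
    also have "\<dots> = f ((u^^n) y)" using inv n by simp
    also have "\<dots> = g y" using gval n by simp
    finally show ?thesis .
  next
    case False
    have "\<not> (\<exists>n. (u^^n) (u y) < x)"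
    proof
      assume "\<exists>n. (u^^n) (u y) < x"
      then obtain n where "(u^^n) (u y) < x" by blast
      hence "(u^^(Suc n)) y < x" by (simp add: funpow_swap1)
      with False show False by blast
    qed
    then show ?thesis using False unfolding g_def by simp
  qed
  hence "g = g \<circ> u" by (auto simp: fun_eq_iff)
  hence "affine_invariant g" unfolding affine_invariant_def using uT uid by blast
  with agree show ?thesis by blast
qed

theorem lemma2:
  fixes f :: "real \<Rightarrow> 's" and x :: real
  assumes "past_affine_invariant f x"
  shows "\<exists>g :: real \<Rightarrow> 's. affine_invariant g \<and> (\<forall>y. y < x \<longrightarrow> f y = g y)"
proof -
  obtain t where tT: "t \<in> T2" and tid: "t \<noteq> id" and ft: "\<And>y. y < x \<Longrightarrow> f y = f (t y)"
    using assms unfolding past_affine_invariant_def by auto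
  obtain a c where a: "a > 0" and t: "t = (\<lambda>y. a * y + c)" using tT unfolding T2_def by auto
  show ?thesis
  proof (cases "a * x + c \<le> x")
    case True
    have into: "z < x \<Longrightarrow> t z < x" for z
      using True a t by (smt (verit) mult_strict_left_mono)
    show ?thesis by (rule build[where x=x and u=t and f=f, OF tT tid into]) (use ft in auto)
  next
    case False
    define u where "u = (\<lambda>y. (1/a) * y + (- c / a))"
    have uT: "u \<in> T2" unfolding T2_def u_def using a by (intro CollectI exI[of _ "1/a"] exI[of _ "-c/a"]) auto
    have tu: "t (u z) = z" for z using a unfolding t u_def by (simp add: field_simps)
    have uid: "u \<noteq> id"
    proof
      assume "u = id"
      hence "t = id" using tu by (auto simp: fun_eq_iff)
      with tid show False by simp
    qed
    have into: "z < x \<Longrightarrow> u z < x" for z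
    proof -
      assume z: "z < x"
      have "z - c < a * x" using False z by linarith
      hence "(z - c) / a < x" using a by (simp add: divide_less_eq mult.commute)
      moreover have "u z = (z - c) / a" unfolding u_def by (simp add: diff_divide_distrib)
      ultimately show "u z < x" by simp
    qed
    have inv: "z < x \<Longrightarrow> f (u z) = f z" for z
      using ft[of "u z"] into tu by simp
    show ?thesis by (rule build[where x=x and u=u and f=f, OF uT uid into inv])
  qed
qed

end
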